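(* Let $d\ge2$, $r>0$ and $a>\frac{d}{2r^2}$. Let $Y$ be the $\mathbb R^d$-valued process solving $$Y(t)=Y(0)+B_1(t)-2a\int_0^tY(s)\,\mathrm ds+2\int_0^tY(s)\,\mathrm dL_1(s),$$ where $B_1$ is a Brownian motion with covariance $\frac12\mathrm{Id}$, $|Y(0)|\ge r/2$ with $\mathbb E|Y(0)|^2<\infty$, and $L_1$ is a nondecreasing continuous process with $L_1(0)=0$ increasing only when $|Y(t)|=r/2$ (an Ornstein–Uhlenbeck process outside the ball of radius $r/2$, normally reflected on its boundary). Let $\tau_r=\inf\{t\ge0:\ |Y(t)|=r/2\}$. Then for all $t\ge0$, $$\mathbb P(\tau_r>t)\le\frac{4\,\mathbb E(|Y(0)|^2)}{r^2}\,e^{-4\left(a-\frac{d}{2r^2}\right)t}.$$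
   Context: $Y=(X_1-X_2)/2$ describes the relative position of two Brownian hard balls of radius $r/2$ with quadratic attraction; $\tau_r$ is the hitting time of a packing (touching) configuration. *)

theory Defs
  imports "HOL-Probability.Probability"
begin

definition half_brownian_motion ::
  "'a measure \<Rightarrow> (real \<Rightarrow> 'a measure) \<Rightarrow> (real \<Rightarrow> 'a \<Rightarrow> real^'d) \<Rightarrow> bool" where
  "half_brownian_motion M F B \<longleftrightarrow>
     filtration (space M) F \<and> (\<forall>t. sets (F t) \<subseteq> sets M) \<and>
     (\<forall>\<omega>\<in>space M. B 0 \<omega> = 0 \<and> continuous_on {0..} (\<lambda>t. B t \<omega>)) \<and>
     (\<forall>t\<ge>0. B t \<in> borel_measurable (F t)) \<and>
     (\<forall>s t. 0 \<le> s \<and> s < t \<longrightarrow>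
        (\<forall>u::real^'d. u \<noteq> 0 \<longrightarrow>
           distributed M lborel (\<lambda>\<omega>. u \<bullet> (B t \<omega> - B s \<omega>))
             (\<lambda>x. ennreal (normal_density 0 (sqrt ((norm u)\<^sup>2 * (t - s) / 2)) x))) \<and>
        (\<forall>A\<in>sets (F s). \<forall>C\<in>sets (borel :: (real^'d) measure).
           measure M (A \<inter> {\<omega>\<in>space M. B t \<omega> - B s \<omega> \<in> C}) =
           measure M A * measure M {\<omega>\<in>space M. B t \<omega> - B s \<omega> \<in> C}))"

text \<open>Lebesgue--Stieltjes measure of a path of L on [0,\<infinity>), extended by L(0)=0 to negative times.\<close>
definition LS_measure :: "(real \<Rightarrow> real) \<Rightarrow> real measure" where
  "LS_measure l = interval_measure (\<lambda>s. l (max 0 s))"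

text \<open>Hitting time of the sphere of radius r/2 (infimum of the empty set is \<infinity>).\<close>
definition hit_time :: "(real \<Rightarrow> 'a \<Rightarrow> 'b::real_normed_vector) \<Rightarrow> real \<Rightarrow> 'a \<Rightarrow> ereal" where
  "hit_time Y r \<omega> = (INF s \<in> {s. 0 \<le> s \<and> norm (Y s \<omega>) = r / 2}. ereal s)"

end

theory Submission
  imports Defs "HOL-Real_Asymp.Real_Asymp"
begin

lemma (in prob_space) normal0_facts:
  fixes X :: "'a \<Rightarrow> real"
  assumes s: "\<sigma> > 0" and D: "distributed M lborel X (\<lambda>x. ennreal (normal_density 0 \<sigma> x))"
  shows "integrable M X" "expectation X = 0" "integrable M (\<lambda>\<omega>. (X \<omega>)^2)"
    "expectation (\<lambda>\<omega>. (X \<omega>)^2) = \<sigma>^2"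
proof -
  show "integrable M X"
    using distributed_integrable_var[OF D] integrable_normal_moment_nz_1[OF s] normal_density_nonneg by blast
  show "expectation X = 0" using normal_distributed_expectation[OF s] D by simp
  have "integrable lborel (\<lambda>x. normal_density 0 \<sigma> x * x^2)"
    using integrable_normal_moment[OF s, of 0 2] by simp
  then show "integrable M (\<lambda>\<omega>. (X \<omega>)^2)"
    using distributed_integrable[OF D, of "\<lambda>x. x^2"] normal_density_nonneg by simp
  have "(\<integral>x. normal_density 0 \<sigma> x * (x-0)^(2*1) \<partial>lborel) = fact (2*1) / ((2/\<sigma>^2)^1 * fact 1)"
    by (rule integral_normal_moment_even[OF s])
  then have "(\<integral>x. normal_density 0 \<sigma> x * x^2 \<partial>lborel) = \<sigma>^2"
    using s by (simp add: field_simps power2_eq_square mult_ac)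
  then show "expectation (\<lambda>\<omega>. (X \<omega>)^2) = \<sigma>^2"
    using distributed_integral[OF D, of "\<lambda>x. x^2"] normal_density_nonneg by simp
qed


lemma sub_meas:
  assumes "sets G \<subseteq> sets M" "space G = space M" "f \<in> measurable G N"
  shows "f \<in> measurable M N"
  using measurable_mono[of N N G M] assms by auto

lemma indep_filt:
  fixes X :: "'a \<Rightarrow> real" and D :: "'a \<Rightarrow> real^'d" and g :: "real^'d \<Rightarrow> real"
  assumes P: "prob_space M" and sub: "sets G \<subseteq> sets M" "space G = space M"
   and X: "X \<in> borel_measurable G" and Dm: "D \<in> borel_measurable M" and g: "g \<in> borel_measurable borel"
   and ind: "\<forall>A\<in>sets G. \<forall>C\<in>sets (borel::(real^'d) measure).
      measure M (A \<inter> {\<omega>\<in>space M. D \<omega> \<in> C}) = measure M A * measure M {\<omega>\<in>space M. D \<omega> \<in> C}"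
  shows "prob_space.indep_var M borel X borel (\<lambda>\<omega>. g (D \<omega>))"
proof -
  interpret prob_space M by fact
  have Xm: "X \<in> borel_measurable M" using sub_meas[OF sub X] .
  have gD: "(\<lambda>\<omega>. g (D \<omega>)) \<in> borel_measurable M" using Dm g by measurable
  have s1: "sigma_sets (space M) {X -` A \<inter> space M |A. A \<in> sets borel} \<subseteq> sets G"
  proof -
    have "{X -` A \<inter> space M |A. A \<in> sets borel} \<subseteq> sets G"
      using X sub(2) by (auto intro: measurable_sets[of X G borel, simplified sub(2)])
    from sets.sigma_sets_subset[OF this] show ?thesis using sub(2) by simp
  qed
  have s2: "sigma_sets (space M) {(\<lambda>\<omega>. g (D \<omega>)) -` A \<inter> space M |A. A \<in> sets borel} = {(\<lambda>\<omega>. g (D \<omega>)) -` A \<inter> space M |A. A \<in> sets (borel::real measure)}"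
  proof -
    have "(\<lambda>\<omega>. g (D \<omega>)) \<in> space M \<rightarrow> UNIV" by simp
    from sigma_sets_vimage_commute[OF this, of "sets borel"]
    show ?thesis using sets.sigma_sets_eq[of "borel::real measure"] by simp
  qed
  show ?thesis unfolding indep_var_eq
  proof (intro conjI)
    show "random_variable borel X" using Xm by simp
    show "random_variable borel (\<lambda>\<omega>. g (D \<omega>))" using gD by simp
    show "indep_set (sigma_sets (space M) {X -` A \<inter> space M |A. A \<in> sets borel})
       (sigma_sets (space M) {(\<lambda>\<omega>. g (D \<omega>)) -` A \<inter> space M |A. A \<in> sets borel})"
    proof (rule indep_setI)
      show "sigma_sets (space M) {X -` A \<inter> space M |A. A \<in> sets borel} \<subseteq> events"
        using s1 sub by auto
      show "sigma_sets (space M) {(\<lambda>\<omega>. g (D \<omega>)) -` A \<inter> space M |A. A \<in> sets borel} \<subseteq> events"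
        unfolding s2 using gD by auto
      fix a b assume a: "a \<in> sigma_sets (space M) {X -` A \<inter> space M |A. A \<in> sets borel}"
        and b: "b \<in> sigma_sets (space M) {(\<lambda>\<omega>. g (D \<omega>)) -` A \<inter> space M |A. A \<in> sets borel}"
      from a s1 have aG: "a \<in> sets G" by auto
      from b s2 obtain C where C: "C \<in> sets (borel::real measure)" "b = (\<lambda>\<omega>. g (D \<omega>)) -` C \<inter> space M" by auto
      have gC: "g -` C \<in> sets (borel::(real^'d) measure)" using measurable_sets[OF g C(1)] by simp
      have "b = {\<omega>\<in>space M. D \<omega> \<in> g -` C}" using C by auto
      moreover have "prob (a \<inter> {\<omega>\<in>space M. D \<omega> \<in> g -` C}) = prob a * prob {\<omega>\<in>space M. D \<omega> \<in> g -` C}"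
        using ind aG gC by blast
      ultimately show "prob (a \<inter> b) = prob a * prob b" by simp
    qed
  qed
qed

lemma incr_facts:
  fixes B :: "real \<Rightarrow> 'a \<Rightarrow> real^'d" and X :: "'a \<Rightarrow> real"
  assumes P: "prob_space M" and BM: "half_brownian_motion M F B" and su: "0 \<le> s" "s \<le> u"
    and X: "X \<in> borel_measurable (F s)" and iX: "integrable M X"
  shows "integrable M (\<lambda>\<omega>. X \<omega> * (B u \<omega> - B s \<omega>)$i)
     \<and> (\<integral>\<omega>. X \<omega> * (B u \<omega> - B s \<omega>)$i \<partial>M) = 0
     \<and> integrable M (\<lambda>\<omega>. X \<omega> * ((B u \<omega> - B s \<omega>)$i)^2)
     \<and> (\<integral>\<omega>. X \<omega> * ((B u \<omega> - B s \<omega>)$i)^2 \<partial>M) = (\<integral>\<omega>. X \<omega> \<partial>M) * ((u - s)/2)"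
proof (cases "s = u")
  case True then show ?thesis by simp
next
  case False
  with su have su': "s < u" by simp
  interpret prob_space M by fact
  from BM have filt: "filtration (space M) F" and subs: "\<And>t. sets (F t) \<subseteq> sets M"
    and Bm: "\<And>t. t \<ge> 0 \<Longrightarrow> B t \<in> borel_measurable (F t)"
    and dist: "\<And>v::real^'d. v \<noteq> 0 \<Longrightarrow> distributed M lborel (\<lambda>\<omega>. v \<bullet> (B u \<omega> - B s \<omega>))
             (\<lambda>x. ennreal (normal_density 0 (sqrt ((norm v)\<^sup>2 * (u - s) / 2)) x))"
    and ind: "\<forall>A\<in>sets (F s). \<forall>C\<in>sets (borel :: (real^'d) measure).
           measure M (A \<inter> {\<omega>\<in>space M. B u \<omega> - B s \<omega> \<in> C}) =
           measure M A * measure M {\<omega>\<in>space M. B u \<omega> - B s \<omega> \<in> C}"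
    unfolding half_brownian_motion_def using su' su by auto
  have sp: "\<And>t. space (F t) = space M" using filt by (simp add: filtration_def)
  have Bu: "B u \<in> borel_measurable M" using sub_meas[OF subs sp Bm] su' su by auto
  have Bs: "B s \<in> borel_measurable M" using sub_meas[OF subs sp Bm] su by auto
  have Dm: "(\<lambda>\<omega>. B u \<omega> - B s \<omega>) \<in> borel_measurable M" using Bu Bs by measurable
  have I1: "indep_var borel X borel (\<lambda>\<omega>. (B u \<omega> - B s \<omega>)$i)"
    by (rule indep_filt[OF P subs sp X Dm _ ind, of "\<lambda>v. v$i"]) simp
  have I2: "indep_var borel X borel (\<lambda>\<omega>. ((B u \<omega> - B s \<omega>)$i)^2)"
    by (rule indep_filt[OF P subs sp X Dm _ ind, of "\<lambda>v. (v$i)^2"]) simp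
  have ax: "axis i (1::real) \<noteq> 0" by (simp add: axis_eq_0_iff)
  have D: "distributed M lborel (\<lambda>\<omega>. (B u \<omega> - B s \<omega>)$i)
             (\<lambda>x. ennreal (normal_density 0 (sqrt ((u - s) / 2)) x))"
    using dist[OF ax] by (simp add: cart_eq_inner_axis inner_commute)
  have sg: "sqrt ((u - s) / 2) > 0" using su' by simp
  note nf = normal0_facts[OF sg D]
  have sq: "(sqrt ((u - s) / 2))^2 = (u - s)/2" using su' by simp
  show ?thesis
    using indep_var_lebesgue_integral[OF I1 iX nf(1)] indep_var_integrable[OF I1 iX nf(1)]
      indep_var_lebesgue_integral[OF I2 iX nf(3)] indep_var_integrable[OF I2 iX nf(3)] nf(2) nf(4) sq
    by simp
qed

lemma le_1_sq: "(x::real) \<le> 1 + x^2"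
proof (cases "x \<le> 1")
  case True then show ?thesis by (smt (verit) zero_le_power2)
next
  case False then have "x \<le> x * x" by (simp add: mult_le_cancel_left1)
  then show ?thesis by (simp add: power2_eq_square)
qed

lemma norm_expand:
  fixes f D :: "real^'d"
  shows "(norm (c *\<^sub>R f + D))^2 = c^2 * (norm f)^2 + 2*c*(\<Sum>i\<in>UNIV. f$i * D$i) + (\<Sum>i\<in>UNIV. (D$i)^2)"
  unfolding power2_norm_eq_inner inner_vec_def
  by (simp add: sum_distrib_left sum.distrib[symmetric] algebra_simps power2_eq_square)

lemma step_ineq:
  fixes B :: "real \<Rightarrow> 'a \<Rightarrow> real^'d" and f :: "'a \<Rightarrow> real^'d"
  assumes P: "prob_space M" and BM: "half_brownian_motion M F B" and su: "0 \<le> s" "s \<le> u"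
    and f: "f \<in> borel_measurable (F s)" and A: "A \<in> sets (F s)"
    and fi: "integrable M (\<lambda>\<omega>. (norm (f \<omega>))^2)" and Af: "\<forall>\<omega>\<in>A. r/2 \<le> norm (f \<omega>)" and r: "r > 0"
  shows "integrable M (\<lambda>\<omega>. (norm (c *\<^sub>R f \<omega> + (B u \<omega> - B s \<omega>)))^2)
    \<and> (\<integral>\<omega>. indicator A \<omega> * (norm (c *\<^sub>R f \<omega> + (B u \<omega> - B s \<omega>)))^2 \<partial>M)
       \<le> (c^2 + 2 * real CARD('d) * (u - s) / r^2) * (\<integral>\<omega>. indicator A \<omega> * (norm (f \<omega>))^2 \<partial>M)"
proof -
  interpret prob_space M by fact
  from BM have filt: "filtration (space M) F" and subs: "\<And>t. sets (F t) \<subseteq> sets M"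
    unfolding half_brownian_motion_def by auto
  have sp: "\<And>t. space (F t) = space M" using filt by (simp add: filtration_def)
  have fM: "f \<in> borel_measurable M" using sub_meas[OF subs sp f] .
  have AM: "A \<in> sets M" using A subs by auto
  define D where "D = (\<lambda>\<omega>. B u \<omega> - B s \<omega>)"
  have fc: "integrable M (\<lambda>\<omega>. f \<omega> $ i)" for i
  proof (rule Bochner_Integration.integrable_bound[of _ "\<lambda>\<omega>. 1 + (norm (f \<omega>))^2"])
    show "integrable M (\<lambda>\<omega>. 1 + (norm (f \<omega>))^2)" using fi by simp
    show "(\<lambda>\<omega>. f \<omega> $ i) \<in> borel_measurable M" using measurable_compose[OF fM, of "\<lambda>v. v$i" borel] by simp
    show "AE \<omega> in M. norm (f \<omega> $ i) \<le> norm (1 + (norm (f \<omega>))^2)"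
    proof (rule AE_I2)
      fix \<omega>
      have "\<bar>f \<omega> $ i\<bar> \<le> norm (f \<omega>)" by (rule component_le_norm_cart)
      moreover have "norm (f \<omega>) \<le> 1 + (norm (f \<omega>))^2"
        by (rule le_1_sq)
      ultimately show "norm (f \<omega> $ i) \<le> norm (1 + (norm (f \<omega>))^2)" by simp
    qed
  qed
  have Afc: "integrable M (\<lambda>\<omega>. indicator A \<omega> * f \<omega> $ i)" for i
    using integrable_mult_indicator[OF AM fc] by simp
  have mfi: "(\<lambda>\<omega>. f \<omega> $ i) \<in> borel_measurable (F s)" for i
    using measurable_compose[OF f, of "\<lambda>v. v$i" borel] by simp
  have mAf: "(\<lambda>\<omega>. indicator A \<omega> * f \<omega> $ i) \<in> borel_measurable (F s)" for i
    using A mfi by (intro borel_measurable_times borel_measurable_indicator) auto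
  have iInd: "integrable M (indicator A :: 'a \<Rightarrow> real)"
    using AM by (intro integrable_real_indicator) (auto simp: less_top[symmetric])
  have i1: "integrable M (\<lambda>_. 1::real)" by simp
  have E1: "integrable M (\<lambda>\<omega>. (indicator A \<omega> * f \<omega> $ i) * D \<omega> $ i)
      \<and> (\<integral>\<omega>. (indicator A \<omega> * f \<omega> $ i) * D \<omega> $ i \<partial>M) = 0" for i
    using incr_facts[OF P BM su, of "\<lambda>\<omega>. indicator A \<omega> * f \<omega> $ i" i] f A Afc
    unfolding D_def using mAf by auto
  have E2: "integrable M (\<lambda>\<omega>. f \<omega> $ i * D \<omega> $ i)" for i
    using incr_facts[OF P BM su, of "\<lambda>\<omega>. f \<omega> $ i" i] mfi fc
    unfolding D_def by auto
  have E3: "integrable M (\<lambda>\<omega>. indicator A \<omega> * (D \<omega> $ i)^2)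
      \<and> (\<integral>\<omega>. indicator A \<omega> * (D \<omega> $ i)^2 \<partial>M) = measure M A * ((u - s)/2)" for i
    using incr_facts[OF P BM su borel_measurable_indicator[OF A] iInd, of i] AM
    unfolding D_def by auto
  have E4: "integrable M (\<lambda>\<omega>. (D \<omega> $ i)^2)" for i
    using incr_facts[OF P BM su borel_measurable_const i1, of i] unfolding D_def by simp
  have int1: "integrable M (\<lambda>\<omega>. c^2 * (norm (f \<omega>))^2 + 2*c*(\<Sum>i\<in>UNIV. f \<omega> $i * D \<omega> $i) + (\<Sum>i\<in>UNIV. (D \<omega> $i)^2))"
    using fi E2 E4 by (intro Bochner_Integration.integrable_add Bochner_Integration.integrable_mult_right Bochner_Integration.integrable_sum) auto
  show ?thesis
  proof
    show "integrable M (\<lambda>\<omega>. (norm (c *\<^sub>R f \<omega> + (B u \<omega> - B s \<omega>)))^2)"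
      using int1 unfolding norm_expand D_def .
    have iA: "integrable M (\<lambda>\<omega>. indicator A \<omega> * (norm (f \<omega>))^2)"
      using integrable_mult_indicator[OF AM fi] by simp
    have eq: "(\<lambda>\<omega>. indicator A \<omega> * (norm (c *\<^sub>R f \<omega> + (B u \<omega> - B s \<omega>)))^2) =
      (\<lambda>\<omega>. c^2 * (indicator A \<omega> * (norm (f \<omega>))^2) + 2*c*(\<Sum>i\<in>UNIV. (indicator A \<omega> * f \<omega> $i) * D \<omega> $i)
          + (\<Sum>i\<in>UNIV. indicator A \<omega> * (D \<omega> $i)^2))"
      unfolding norm_expand D_def by (auto simp: fun_eq_iff indicator_def)
    have "(\<integral>\<omega>. indicator A \<omega> * (norm (c *\<^sub>R f \<omega> + (B u \<omega> - B s \<omega>)))^2 \<partial>M)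
       = c^2 * (\<integral>\<omega>. indicator A \<omega> * (norm (f \<omega>))^2 \<partial>M) + 2*c*(\<Sum>i\<in>UNIV. (\<integral>\<omega>. (indicator A \<omega> * f \<omega> $i) * D \<omega> $i \<partial>M))
          + (\<Sum>i\<in>UNIV. (\<integral>\<omega>. indicator A \<omega> * (D \<omega> $i)^2 \<partial>M))"
    proof -
      have I1: "integrable M (\<lambda>\<omega>. (indicator A \<omega> * f \<omega> $i) * D \<omega> $i)" for i using E1 by blast
      have I3: "integrable M (\<lambda>\<omega>. indicator A \<omega> * (D \<omega> $i)^2)" for i using E3 by blast
      define g1 where "g1 = (\<lambda>\<omega>. c^2 * (indicator A \<omega> * (norm (f \<omega>))^2))"
      define g2 where "g2 = (\<lambda>\<omega>. 2*c*(\<Sum>i\<in>UNIV. (indicator A \<omega> * f \<omega> $i) * D \<omega> $i))"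
      define g3 where "g3 = (\<lambda>\<omega>. \<Sum>i\<in>UNIV. indicator A \<omega> * (D \<omega> $i)^2)"
      have ig1: "integrable M g1" unfolding g1_def using iA by (intro Bochner_Integration.integrable_mult_right)
      have ig2: "integrable M g2" unfolding g2_def using I1
        by (intro Bochner_Integration.integrable_mult_right Bochner_Integration.integrable_sum)
      have ig3: "integrable M g3" unfolding g3_def using I3
        by (intro Bochner_Integration.integrable_sum)
      have eq': "(\<lambda>\<omega>. indicator A \<omega> * (norm (c *\<^sub>R f \<omega> + (B u \<omega> - B s \<omega>)))^2) = (\<lambda>\<omega>. g1 \<omega> + g2 \<omega> + g3 \<omega>)"
        unfolding g1_def g2_def g3_def eq ..
      have "(\<integral>\<omega>. g1 \<omega> + g2 \<omega> + g3 \<omega> \<partial>M) = (\<integral>\<omega>. g1 \<omega> + g2 \<omega> \<partial>M) + (\<integral>\<omega>. g3 \<omega> \<partial>M)"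
        by (rule Bochner_Integration.integral_add[OF Bochner_Integration.integrable_add[OF ig1 ig2] ig3])
      also have "(\<integral>\<omega>. g1 \<omega> + g2 \<omega> \<partial>M) = (\<integral>\<omega>. g1 \<omega> \<partial>M) + (\<integral>\<omega>. g2 \<omega> \<partial>M)"
        by (rule Bochner_Integration.integral_add[OF ig1 ig2])
      also have "(\<integral>\<omega>. g1 \<omega> \<partial>M) = c^2 * (\<integral>\<omega>. indicator A \<omega> * (norm (f \<omega>))^2 \<partial>M)"
        unfolding g1_def by simp
      also have "(\<integral>\<omega>. g2 \<omega> \<partial>M) = 2*c*(\<Sum>i\<in>UNIV. (\<integral>\<omega>. (indicator A \<omega> * f \<omega> $i) * D \<omega> $i \<partial>M))"
      proof -
        have s2: "(\<integral>\<omega>. (\<Sum>i\<in>UNIV. (indicator A \<omega> * f \<omega> $i) * D \<omega> $i) \<partial>M) = (\<Sum>i\<in>UNIV. (\<integral>\<omega>. (indicator A \<omega> * f \<omega> $i) * D \<omega> $i \<partial>M))"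
          by (rule Bochner_Integration.integral_sum) (rule I1)
        show ?thesis unfolding g2_def by (simp only: integral_mult_right_zero s2)
      qed
      also have "(\<integral>\<omega>. g3 \<omega> \<partial>M) = (\<Sum>i\<in>UNIV. (\<integral>\<omega>. indicator A \<omega> * (D \<omega> $i)^2 \<partial>M))"
        unfolding g3_def by (rule Bochner_Integration.integral_sum) (rule I3)
      finally show ?thesis unfolding eq' .
    qed
    also have "\<dots> = c^2 * (\<integral>\<omega>. indicator A \<omega> * (norm (f \<omega>))^2 \<partial>M) + real CARD('d) * (measure M A * ((u - s)/2))"
    proof -
      have E1': "(\<integral>\<omega>. (indicator A \<omega> * f \<omega> $ i) * D \<omega> $ i \<partial>M) = 0" for i using E1 by blast
      have E3': "(\<integral>\<omega>. indicator A \<omega> * (D \<omega> $ i)^2 \<partial>M) = measure M A * ((u - s)/2)" for i using E3 by blast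
      show ?thesis unfolding E1' E3' by simp
    qed
    also have "\<dots> \<le> (c^2 + 2 * real CARD('d) * (u - s) / r^2) * (\<integral>\<omega>. indicator A \<omega> * (norm (f \<omega>))^2 \<partial>M)"
    proof -
      have "(\<integral>\<omega>. indicator A \<omega> * (r/2)^2 \<partial>M) \<le> (\<integral>\<omega>. indicator A \<omega> * (norm (f \<omega>))^2 \<partial>M)"
      proof (rule integral_mono)
        show "integrable M (\<lambda>\<omega>. indicator A \<omega> * (r/2)^2)" using iInd by simp
        show "integrable M (\<lambda>\<omega>. indicator A \<omega> * (norm (f \<omega>))^2)" by fact
        fix \<omega> show "indicator A \<omega> * (r/2)^2 \<le> indicator A \<omega> * (norm (f \<omega>))^2"
          using Af r by (auto simp: indicator_def intro!: power_mono)
      qed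
      then have "measure M A * (r^2/4) \<le> (\<integral>\<omega>. indicator A \<omega> * (norm (f \<omega>))^2 \<partial>M)"
        using AM by (simp add: power_divide)
      then have "measure M A \<le> 4 / r^2 * (\<integral>\<omega>. indicator A \<omega> * (norm (f \<omega>))^2 \<partial>M)"
        using r by (simp add: field_simps)
      then have "real CARD('d) * (measure M A * ((u - s)/2)) \<le> real CARD('d) * ((4 / r^2 * (\<integral>\<omega>. indicator A \<omega> * (norm (f \<omega>))^2 \<partial>M)) * ((u - s)/2))"
        using su by (intro mult_left_mono mult_right_mono) auto
      moreover have "real CARD('d) * ((4 / r^2 * (\<integral>\<omega>. indicator A \<omega> * (norm (f \<omega>))^2 \<partial>M)) * ((u - s)/2))
        = 2 * real CARD('d) * (u - s) / r^2 * (\<integral>\<omega>. indicator A \<omega> * (norm (f \<omega>))^2 \<partial>M)"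
        using r by (simp add: field_simps)
      moreover have "(c^2 + 2 * real CARD('d) * (u - s) / r^2) * (\<integral>\<omega>. indicator A \<omega> * (norm (f \<omega>))^2 \<partial>M)
        = c^2 * (\<integral>\<omega>. indicator A \<omega> * (norm (f \<omega>))^2 \<partial>M) + 2 * real CARD('d) * (u - s) / r^2 * (\<integral>\<omega>. indicator A \<omega> * (norm (f \<omega>))^2 \<partial>M)"
        by (simp add: distrib_right)
      ultimately show ?thesis by linarith
    qed
    finally show "(\<integral>\<omega>. indicator A \<omega> * (norm (c *\<^sub>R f \<omega> + (B u \<omega> - B s \<omega>)))^2 \<partial>M)
       \<le> (c^2 + 2 * real CARD('d) * (u - s) / r^2) * (\<integral>\<omega>. indicator A \<omega> * (norm (f \<omega>))^2 \<partial>M)" .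
  qed
qed

fun euler :: "real \<Rightarrow> real \<Rightarrow> (real \<Rightarrow> 'a \<Rightarrow> 'v::real_vector) \<Rightarrow> ('a \<Rightarrow> 'v) \<Rightarrow> nat \<Rightarrow> 'a \<Rightarrow> 'v" where
  "euler c \<delta> B Z0 0 \<omega> = Z0 \<omega>"
| "euler c \<delta> B Z0 (Suc k) \<omega> = c *\<^sub>R euler c \<delta> B Z0 k \<omega> + (B (real (Suc k) * \<delta>) \<omega> - B (real k * \<delta>) \<omega>)"

fun aset :: "'a set \<Rightarrow> real \<Rightarrow> (nat \<Rightarrow> 'a \<Rightarrow> 'v::real_normed_vector) \<Rightarrow> nat \<Rightarrow> 'a set" where
  "aset S \<rho> Z 0 = {\<omega>\<in>S. \<rho> \<le> norm (Z 0 \<omega>)}"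
| "aset S \<rho> Z (Suc k) = aset S \<rho> Z k \<inter> {\<omega>\<in>S. \<rho> \<le> norm (Z (Suc k) \<omega>)}"

lemma aset_sub: "\<omega> \<in> aset S \<rho> Z k \<Longrightarrow> \<rho> \<le> norm (Z k \<omega>) \<and> \<omega> \<in> S"
  by (cases k) auto

lemma ge_set_meas:
  fixes g :: "'a \<Rightarrow> real^'d"
  assumes [measurable]: "g \<in> borel_measurable N"
  shows "{\<omega>\<in>space N. \<rho> \<le> norm (g \<omega>)} \<in> sets N"
  by measurable

lemma discrete_all:
  fixes B :: "real \<Rightarrow> 'a \<Rightarrow> real^'d" and Z0 :: "'a \<Rightarrow> real^'d"
  assumes P: "prob_space M" and BM: "half_brownian_motion M F B" and \<delta>: "0 \<le> \<delta>" and r: "r > 0"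
    and Z0: "Z0 \<in> borel_measurable (F 0)" and iZ0: "integrable M (\<lambda>\<omega>. (norm (Z0 \<omega>))^2)"
  shows "euler c \<delta> B Z0 k \<in> borel_measurable (F (real k * \<delta>))
    \<and> aset (space M) (r/2) (euler c \<delta> B Z0) k \<in> sets (F (real k * \<delta>))
    \<and> integrable M (\<lambda>\<omega>. (norm (euler c \<delta> B Z0 k \<omega>))^2)
    \<and> (\<integral>\<omega>. indicator (aset (space M) (r/2) (euler c \<delta> B Z0) k) \<omega> * (norm (euler c \<delta> B Z0 k \<omega>))^2 \<partial>M)
       \<le> (c^2 + 2 * real CARD('d) * \<delta> / r^2)^k * (\<integral>\<omega>. (norm (Z0 \<omega>))^2 \<partial>M)"
proof -
  interpret prob_space M by fact
  from BM have filt: "filtration (space M) F" and subs: "\<And>t. sets (F t) \<subseteq> sets M"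
    and Bm: "\<And>t. t \<ge> 0 \<Longrightarrow> B t \<in> borel_measurable (F t)"
    unfolding half_brownian_motion_def by auto
  have sp: "\<And>t. space (F t) = space M" using filt by (simp add: filtration_def)
  have mono: "\<And>s t. s \<le> t \<Longrightarrow> sets (F s) \<subseteq> sets (F t)" using filtration.sets_F_mono[OF filt] by auto
  have lift: "g \<in> borel_measurable (F t)" if "g \<in> borel_measurable (F s)" "s \<le> t" for g :: "'a \<Rightarrow> real^'d" and s t
    using sub_meas[OF mono[OF that(2)] _ that(1)] sp by simp
  define Z where "Z = euler c \<delta> B Z0"
  define A where "A = aset (space M) (r/2) Z"
  define \<rho> where "\<rho> = c^2 + 2 * real CARD('d) * \<delta> / r^2"
  have \<rho>0: "0 \<le> \<rho>" unfolding \<rho>_def using \<delta> r by simp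
  have "Z k \<in> borel_measurable (F (real k * \<delta>))
    \<and> A k \<in> sets (F (real k * \<delta>))
    \<and> integrable M (\<lambda>\<omega>. (norm (Z k \<omega>))^2)
    \<and> (\<integral>\<omega>. indicator (A k) \<omega> * (norm (Z k \<omega>))^2 \<partial>M) \<le> \<rho>^k * (\<integral>\<omega>. (norm (Z0 \<omega>))^2 \<partial>M)"
  proof (induction k)
    case 0
    have Z0e: "Z 0 = Z0" unfolding Z_def by (rule ext) simp
    have A0: "A 0 = {\<omega>\<in>space (F 0). r/2 \<le> norm (Z0 \<omega>)}" unfolding A_def sp using Z0e by simp
    have A0s: "A 0 \<in> sets (F 0)" unfolding A0 by (rule ge_set_meas[OF Z0])
    have A0M: "A 0 \<in> sets M" using A0s subs by auto
    have "(\<integral>\<omega>. indicator (A 0) \<omega> * (norm (Z0 \<omega>))^2 \<partial>M) \<le> (\<integral>\<omega>. (norm (Z0 \<omega>))^2 \<partial>M)"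
      using integrable_mult_indicator[OF A0M iZ0]
      by (intro integral_mono) (auto simp: indicator_def iZ0)
    then show ?case using Z0 A0s iZ0 unfolding Z0e by simp
  next
    case (Suc k)
    let ?s = "real k * \<delta>" and ?u = "real (Suc k) * \<delta>"
    have su: "0 \<le> ?s" "?s \<le> ?u" using \<delta> by (auto intro: mult_right_mono)
    have us: "?u - ?s = \<delta>" by (simp add: algebra_simps)
    have Af: "\<forall>\<omega>\<in>A k. r/2 \<le> norm (Z k \<omega>)" unfolding A_def using aset_sub[where S="space M" and \<rho>="r/2" and Z=Z and k=k] by simp
    have ZS: "Z (Suc k) = (\<lambda>\<omega>. c *\<^sub>R Z k \<omega> + (B ?u \<omega> - B ?s \<omega>))"
      unfolding Z_def by (rule ext) simp
    note st = step_ineq[OF P BM su conjunct1[OF Suc] conjunct1[OF conjunct2[OF Suc]]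
        conjunct1[OF conjunct2[OF conjunct2[OF Suc]]] Af r, of c]
    have m1: "Z k \<in> borel_measurable (F ?u)" using lift[OF conjunct1[OF Suc] su(2)] .
    have m2: "B ?u \<in> borel_measurable (F ?u)" using Bm su by auto
    have m3: "B ?s \<in> borel_measurable (F ?u)" using lift[OF Bm[OF su(1)] su(2)] .
    have mZ: "Z (Suc k) \<in> borel_measurable (F ?u)" unfolding ZS using m1 m2 m3
      by (intro borel_measurable_add borel_measurable_scaleR borel_measurable_diff borel_measurable_const)
    have Ak: "A k \<in> sets (F ?u)" using Suc mono[OF su(2)] by auto
    have AS: "A (Suc k) = A k \<inter> {\<omega>\<in>space (F ?u). r/2 \<le> norm (Z (Suc k) \<omega>)}"
      unfolding A_def sp by simp
    have ASs: "A (Suc k) \<in> sets (F ?u)" unfolding AS using Ak ge_set_meas[OF mZ, of "r/2"] by (intro sets.Int)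
    have ASM: "A (Suc k) \<in> sets M" using ASs subs by auto
    have iZ: "integrable M (\<lambda>\<omega>. (norm (Z (Suc k) \<omega>))^2)" using st unfolding ZS by simp
    have sub: "A (Suc k) \<subseteq> A k" unfolding A_def by auto
    have "(\<integral>\<omega>. indicator (A (Suc k)) \<omega> * (norm (Z (Suc k) \<omega>))^2 \<partial>M)
        \<le> (\<integral>\<omega>. indicator (A k) \<omega> * (norm (Z (Suc k) \<omega>))^2 \<partial>M)"
    proof (rule integral_mono)
      show "integrable M (\<lambda>\<omega>. indicator (A (Suc k)) \<omega> * (norm (Z (Suc k) \<omega>))^2)"
        using integrable_mult_indicator[OF ASM iZ] by simp
      show "integrable M (\<lambda>\<omega>. indicator (A k) \<omega> * (norm (Z (Suc k) \<omega>))^2)"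
        using integrable_mult_indicator[OF _ iZ, of "A k"] Suc subs by auto
      fix \<omega> show "indicator (A (Suc k)) \<omega> * (norm (Z (Suc k) \<omega>))^2 \<le> indicator (A k) \<omega> * (norm (Z (Suc k) \<omega>))^2"
        using sub by (auto simp: indicator_def)
    qed
    also have "\<dots> \<le> \<rho> * (\<integral>\<omega>. indicator (A k) \<omega> * (norm (Z k \<omega>))^2 \<partial>M)"
      using st unfolding ZS \<rho>_def us by simp
    also have "\<dots> \<le> \<rho> * (\<rho>^k * (\<integral>\<omega>. (norm (Z0 \<omega>))^2 \<partial>M))"
      using Suc \<rho>0 by (intro mult_left_mono) auto
    finally show ?case using mZ ASs iZ by simp
  qed
  then show ?thesis unfolding Z_def A_def \<rho>_def .
qed

lemma euler_close:
  fixes y :: "real \<Rightarrow> real^'d" and B :: "real \<Rightarrow> 'a \<Rightarrow> real^'d" and Z0 :: "'a \<Rightarrow> real^'d"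
  assumes t: "0 \<le> t" and a: "0 < a" and yc: "continuous_on {0..t} y"
    and eq: "\<forall>s\<in>{0..t}. y s = Z0 \<omega> + B s \<omega> - (2*a) *\<^sub>R integral {0..s} y"
    and y0: "y 0 = Z0 \<omega>" and \<eta>: "0 < \<eta>"
  shows "\<exists>N. \<forall>n\<ge>N. \<forall>k\<le>n. norm (y (real k * (t / real n)) - euler (1 - 2*a*(t/real n)) (t/real n) B Z0 k \<omega>) \<le> \<eta>"
proof -
  define \<epsilon> where "\<epsilon> = \<eta> / exp (2*a*t)"
  have \<epsilon>: "0 < \<epsilon>" unfolding \<epsilon>_def using \<eta> by simp
  have "uniformly_continuous_on {0..t} y" using yc by (intro compact_uniformly_continuous) auto
  then obtain d where d: "d > 0" and dd: "\<And>x x'. x \<in> {0..t} \<Longrightarrow> x' \<in> {0..t} \<Longrightarrow> dist x' x < d \<Longrightarrow> dist (y x') (y x) < \<epsilon>"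
    unfolding uniformly_continuous_on_def using \<epsilon> by metis
  define N where "N = nat (ceiling (t / d)) + 1"
  have N1: "N \<ge> 1" unfolding N_def by simp
  have tN: "t / real N < d"
  proof -
    have "t / d < real N" unfolding N_def by linarith
    then have "t < d * real N" using d by (simp add: field_simps)
    then show ?thesis using N1 d by (simp add: field_simps)
  qed
  show ?thesis
  proof (intro exI allI impI)
    fix n k :: nat assume nN: "N \<le> n" and kn: "k \<le> n"
    define \<delta> where "\<delta> = t / real n"
    have n0: "real n > 0" using nN N1 by simp
    have \<delta>0: "0 \<le> \<delta>" unfolding \<delta>_def using t n0 by simp
    have \<delta>d: "\<delta> < d"
    proof -
      have "\<delta> \<le> t / real N" unfolding \<delta>_def using t N1 nN by (intro divide_left_mono) auto
      then show ?thesis using tN by simp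
    qed
    have nt: "real n * \<delta> = t" unfolding \<delta>_def using n0 by simp
    define c where "c = 1 - 2*a*\<delta>"
    have c: "\<bar>c\<bar> \<le> 1 + 2*a*\<delta>" unfolding c_def using a \<delta>0 by (simp add: abs_le_iff)
    define Z where "Z = (\<lambda>k. euler c \<delta> B Z0 k \<omega>)"
    define e where "e = (\<lambda>k. norm (y (real k * \<delta>) - Z k))"
    have yint: "y integrable_on {p..q}" if "0 \<le> p" "q \<le> t" for p q
      using yc that by (intro integrable_continuous_interval) (auto intro: continuous_on_subset)
    have main: "j \<le> n \<longrightarrow> e j + \<epsilon> \<le> (1 + 2*a*\<delta>)^j * \<epsilon>" for j
    proof (induction j)
      case 0 show ?case unfolding e_def Z_def using y0 by simp
    next
      case (Suc j)
      show ?case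
      proof
        assume jn: "Suc j \<le> n"
        let ?p = "real j * \<delta>" and ?q = "real (Suc j) * \<delta>"
        have p0: "0 \<le> ?p" using \<delta>0 by simp
        have pq: "?p \<le> ?q" using \<delta>0 by (simp add: mult_right_mono)
        have qt: "?q \<le> t" unfolding nt[symmetric] using jn \<delta>0 by (intro mult_right_mono) auto
        have qp: "?q - ?p = \<delta>" by (simp add: algebra_simps)
        have IH: "e j + \<epsilon> \<le> (1 + 2*a*\<delta>)^j * \<epsilon>" using Suc jn by simp
        define I where "I = integral {?p..?q} (\<lambda>u. y u - y ?p)"
        have comb: "integral {0..?p} y + integral {?p..?q} y = integral {0..?q} y"
          using Henstock_Kurzweil_Integration.integral_combine[OF p0 pq yint[OF order_refl qt]] by simp
        have Iy: "integral {?p..?q} y = \<delta> *\<^sub>R y ?p + I"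
        proof -
          have "integral {?p..?q} (\<lambda>u. y u - y ?p) = integral {?p..?q} y - integral {?p..?q} (\<lambda>u. y ?p)"
            using yint[OF p0 qt] by (intro Henstock_Kurzweil_Integration.integral_diff) auto
          then show ?thesis unfolding I_def using pq qp by (simp add: content_real)
        qed
        have eqq: "y ?q - y ?p = (B ?q \<omega> - B ?p \<omega>) - (2*a) *\<^sub>R integral {?p..?q} y"
        proof -
          have e1: "y ?q = Z0 \<omega> + B ?q \<omega> - (2*a) *\<^sub>R integral {0..?q} y" using eq p0 pq qt by auto
          have e2: "y ?p = Z0 \<omega> + B ?p \<omega> - (2*a) *\<^sub>R integral {0..?p} y" using eq p0 pq qt by auto
          show ?thesis unfolding e1 e2 comb[symmetric] by (simp add: algebra_simps)
        qed
        have Ib: "norm I \<le> \<epsilon> * \<delta>"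
        proof -
          have "norm I \<le> \<epsilon> * Henstock_Kurzweil_Integration.content {?p..?q}"
          proof (rule has_integral_bound_real[of _ "{}"])
            show "0 \<le> \<epsilon>" using \<epsilon> by simp
            show "((\<lambda>u. y u - y ?p) has_integral I) {?p..?q}"
              unfolding I_def using yint[OF p0 qt] by (intro integrable_integral Henstock_Kurzweil_Integration.integrable_diff) auto
            fix u assume u: "u \<in> {?p..?q} - {}"
            have "dist u ?p < d" using u \<delta>d qp by (auto simp: dist_real_def)
            then have "dist (y u) (y ?p) < \<epsilon>" using dd[of ?p u] u p0 qt by auto
            then show "norm (y u - y ?p) \<le> \<epsilon>" by (simp add: dist_norm)
          qed simp
          then show ?thesis using pq qp by (simp add: content_real)
        qed
        have ZS: "Z (Suc j) = c *\<^sub>R Z j + (B ?q \<omega> - B ?p \<omega>)" unfolding Z_def by simp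
        have eS: "y ?q - Z (Suc j) = c *\<^sub>R (y ?p - Z j) - (2*a) *\<^sub>R I"
        proof -
          have "y ?q = y ?p + (B ?q \<omega> - B ?p \<omega>) - (2*a) *\<^sub>R (\<delta> *\<^sub>R y ?p + I)" using eqq Iy by (simp add: algebra_simps)
          then show ?thesis unfolding ZS c_def by (simp add: algebra_simps)
        qed
        have "e (Suc j) \<le> \<bar>c\<bar> * e j + 2*a*(\<epsilon>*\<delta>)"
        proof -
          have "e (Suc j) \<le> norm (c *\<^sub>R (y ?p - Z j)) + norm ((2*a) *\<^sub>R I)"
            unfolding e_def eS by (rule norm_triangle_ineq4)
          also have "\<dots> = \<bar>c\<bar> * e j + 2*a*norm I" unfolding e_def using a by simp
          also have "\<dots> \<le> \<bar>c\<bar> * e j + 2*a*(\<epsilon>*\<delta>)" using Ib a by simp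
          finally show ?thesis .
        qed
        also have "\<dots> \<le> (1 + 2*a*\<delta>) * e j + 2*a*(\<epsilon>*\<delta>)"
          using c unfolding e_def by (intro add_right_mono mult_right_mono) auto
        finally have "e (Suc j) + \<epsilon> \<le> (1 + 2*a*\<delta>) * (e j + \<epsilon>)" by (simp add: algebra_simps)
        also have "\<dots> \<le> (1 + 2*a*\<delta>) * ((1 + 2*a*\<delta>)^j * \<epsilon>)"
          using IH a \<delta>0 by (intro mult_left_mono) auto
        finally show "e (Suc j) + \<epsilon> \<le> (1 + 2*a*\<delta>)^Suc j * \<epsilon>" by simp
      qed
    qed
    have "e k \<le> (1 + 2*a*\<delta>)^k * \<epsilon>" using main[of k] kn \<epsilon> by simp
    also have "\<dots> \<le> (1 + 2*a*\<delta>)^n * \<epsilon>"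
      using kn a \<delta>0 \<epsilon> by (intro mult_right_mono power_increasing) auto
    also have "\<dots> \<le> exp (2*a*\<delta>)^n * \<epsilon>"
      using a \<delta>0 \<epsilon> by (intro mult_right_mono power_mono exp_ge_add_one_self) auto
    also have "exp (2*a*\<delta>)^n = exp (2*a*t)"
      unfolding exp_of_nat_mult[symmetric] nt[symmetric] by (simp add: algebra_simps)
    also have "exp (2*a*t) * \<epsilon> = \<eta>" unfolding \<epsilon>_def by simp
    finally show "norm (y (real k * (t / real n)) - euler (1 - 2*a*(t/real n)) (t/real n) B Z0 k \<omega>) \<le> \<eta>"
      unfolding e_def Z_def c_def \<delta>_def .
  qed
qed

lemma LS_zero:
  fixes l :: "real \<Rightarrow> real" and f :: "real \<Rightarrow> real^'d"
  assumes lc: "continuous_on {0..} l" and lm: "\<And>s u. 0 \<le> s \<Longrightarrow> s \<le> u \<Longrightarrow> l s \<le> l u"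
    and l0: "l s = l 0" and s: "0 \<le> s"
  shows "(LINT v:{0..s}|LS_measure l. f v) = 0"
proof -
  define G where "G = (\<lambda>v. l (max 0 v))"
  have Gm: "G x \<le> G y" if "x \<le> y" for x y using lm that unfolding G_def by auto
  have Gc: "continuous_on UNIV G" unfolding G_def
    by (rule continuous_on_compose2[OF lc]) (auto intro: continuous_intros)
  have Gr: "continuous (at_right x) G" for x
    using Gc by (simp add: continuous_on_eq_continuous_at continuous_at_imp_continuous_at_within)
  have LS: "LS_measure l = interval_measure G" unfolding LS_measure_def G_def ..
  have "emeasure (interval_measure G) {-1<..s} = ennreal (G s - G (-1))"
    using s by (intro emeasure_interval_measure_Ioc Gm Gr) auto
  also have "G s - G (-1) = 0" unfolding G_def using s l0 by simp
  finally have nul: "{-1<..s} \<in> null_sets (LS_measure l)" unfolding LS by (simp add: null_sets_def sets_interval_measure)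
  have "AE v in LS_measure l. v \<notin> {0..s}"
    by (rule AE_I'[OF nul]) auto
  then have "AE v in LS_measure l. indicator {0..s} v *\<^sub>R f v = 0"
    by (rule AE_mp) (auto intro!: AE_I2)
  then show ?thesis unfolding set_lebesgue_integral_def by (rule integral_eq_zero_AE)
qed

lemma aset_mem: "\<omega> \<in> S \<Longrightarrow> (\<forall>k\<le>n. \<rho> \<le> norm (Z k \<omega>)) \<Longrightarrow> \<omega> \<in> aset S \<rho> Z n"
  by (induction n) auto

lemma prob_le_sq:
  fixes f :: "'a \<Rightarrow> real^'d"
  assumes P: "prob_space M" and A: "A \<in> sets M" and fi: "integrable M (\<lambda>\<omega>. (norm (f \<omega>))^2)"
    and Af: "\<forall>\<omega>\<in>A. r/2 \<le> norm (f \<omega>)" and r: "r > 0"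
  shows "measure M A \<le> 4 / r^2 * (\<integral>\<omega>. indicator A \<omega> * (norm (f \<omega>))^2 \<partial>M)"
proof -
  interpret prob_space M by fact
  have iInd: "integrable M (indicator A :: 'a \<Rightarrow> real)"
    using A by (intro integrable_real_indicator) (auto simp: less_top[symmetric])
  have "(\<integral>\<omega>. indicator A \<omega> * (r/2)^2 \<partial>M) \<le> (\<integral>\<omega>. indicator A \<omega> * (norm (f \<omega>))^2 \<partial>M)"
  proof (rule integral_mono)
    show "integrable M (\<lambda>\<omega>. indicator A \<omega> * (r/2)^2)" using iInd by simp
    show "integrable M (\<lambda>\<omega>. indicator A \<omega> * (norm (f \<omega>))^2)"
      using integrable_mult_indicator[OF A fi] by simp
    fix \<omega> show "indicator A \<omega> * (r/2)^2 \<le> indicator A \<omega> * (norm (f \<omega>))^2"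
      using Af r by (auto simp: indicator_def intro!: power_mono)
  qed
  then have "measure M A * (r^2/4) \<le> (\<integral>\<omega>. indicator A \<omega> * (norm (f \<omega>))^2 \<partial>M)"
    using A by (simp add: power_divide)
  then show ?thesis using r by (simp add: field_simps)
qed

lemma exp_lim: "((\<lambda>n::nat. (1 + x/real n + y / (real n)^2) ^ n) \<longlonglongrightarrow> exp x)"
  by real_asymp

lemma rho_lim:
  "(\<lambda>n::nat. ((1 - 2*a*(t/real n))^2 + 2 * real CARD('d) * (t/real n) / r^2) ^ n)
     \<longlonglongrightarrow> exp (- 4 * (a - real CARD('d) / (2 * r\<^sup>2)) * t)"
proof -
  have "((1 - 2*a*(t/real n))^2 + 2 * real CARD('d) * (t/real n) / r^2)
     = 1 + (- 4 * (a - real CARD('d) / (2 * r\<^sup>2)) * t) / real n + (4*a^2*t^2) / (real n)^2" for n :: nat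
    by (cases "r = 0"; cases "n = 0") (simp_all add: field_simps power2_eq_square)
  then show ?thesis using exp_lim by simp
qed

theorem proposition2p5:
  fixes M :: "'a measure" and F :: "real \<Rightarrow> 'a measure"
    and Y B :: "real \<Rightarrow> 'a \<Rightarrow> real^'d" and L :: "real \<Rightarrow> 'a \<Rightarrow> real"
    and r a t :: real
  assumes "prob_space M"
    and "CARD('d) \<ge> 2"
    and "r > 0"
    and "a > real CARD('d) / (2 * r\<^sup>2)"
    and BM: "half_brownian_motion M F B"
    and Y_adapted: "\<And>s. s \<ge> 0 \<Longrightarrow> Y s \<in> borel_measurable (F s)"
    and L_adapted: "\<And>s. s \<ge> 0 \<Longrightarrow> L s \<in> borel_measurable (F s)"
    and Y_cont: "\<And>\<omega>. \<omega> \<in> space M \<Longrightarrow> continuous_on {0..} (\<lambda>s. Y s \<omega>)"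
    and L_cont: "\<And>\<omega>. \<omega> \<in> space M \<Longrightarrow> continuous_on {0..} (\<lambda>s. L s \<omega>)"
    and L_zero: "\<And>\<omega>. \<omega> \<in> space M \<Longrightarrow> L 0 \<omega> = 0"
    and L_mono: "\<And>\<omega> s u. \<omega> \<in> space M \<Longrightarrow> 0 \<le> s \<Longrightarrow> s \<le> u \<Longrightarrow> L s \<omega> \<le> L u \<omega>"
    and Y0: "\<And>\<omega>. \<omega> \<in> space M \<Longrightarrow> norm (Y 0 \<omega>) \<ge> r / 2"
    and Y0_sq: "integrable M (\<lambda>\<omega>. (norm (Y 0 \<omega>))\<^sup>2)"
    and outside: "AE \<omega> in M. \<forall>s\<ge>0. norm (Y s \<omega>) \<ge> r / 2"
    and L_flat: "AE \<omega> in M. \<forall>s u. 0 \<le> s \<and> s \<le> u \<and> (\<forall>v\<in>{s..u}. norm (Y v \<omega>) \<noteq> r / 2)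
                    \<longrightarrow> L u \<omega> = L s \<omega>"
    and SDE: "AE \<omega> in M. \<forall>s\<ge>0.
       Y s \<omega> = Y 0 \<omega> + B s \<omega> - (2 * a) *\<^sub>R integral {0..s} (\<lambda>v. Y v \<omega>)
                + 2 *\<^sub>R (LINT v:{0..s}|LS_measure (\<lambda>v. L v \<omega>). Y v \<omega>)"
    and "t \<ge> 0"
  shows "measure M {\<omega> \<in> space M. hit_time Y r \<omega> > ereal t}
           \<le> 4 * (\<integral>\<omega>. (norm (Y 0 \<omega>))\<^sup>2 \<partial>M) / r\<^sup>2
              * exp (- 4 * (a - real CARD('d) / (2 * r\<^sup>2)) * t)"
proof -
  interpret prob_space M by fact
  have P: "prob_space M" by fact
  have r: "r > 0" by fact
  have t: "0 \<le> t" by fact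
  have a: "a > 0"
  proof -
    have "0 \<le> real CARD('d) / (2 * r\<^sup>2)" by simp
    then show ?thesis using assms(4) by linarith
  qed
  from BM have filt: "filtration (space M) F" and subs: "\<And>t. sets (F t) \<subseteq> sets M"
    and Bm: "\<And>t. t \<ge> 0 \<Longrightarrow> B t \<in> borel_measurable (F t)"
    unfolding half_brownian_motion_def by auto
  have Y0m: "Y 0 \<in> borel_measurable (F 0)" using Y_adapted by simp
  define E where "E = (\<integral>\<omega>. (norm (Y 0 \<omega>))\<^sup>2 \<partial>M)"
  define \<delta> where "\<delta> = (\<lambda>n::nat. t / real n)"
  define Zn where "Zn = (\<lambda>n. euler (1 - 2*a*(t/real n)) (t/real n) B (Y 0))"
  define An where "An = (\<lambda>n. aset (space M) (r/2) (Zn n) n)"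
  define \<rho> where "\<rho> = (\<lambda>n::nat. (1 - 2*a*(t/real n))^2 + 2 * real CARD('d) * (t/real n) / r^2)"
  define Kb where "Kb = (\<lambda>n. 4 / r^2 * (\<rho> n ^ n * E))"
  have An_sets: "An n \<in> sets M" and An_le: "measure M (An n) \<le> Kb n" for n
  proof -
    have \<delta>0: "0 \<le> t / real n" using t by simp
    note D = discrete_all[OF P BM \<delta>0 r Y0m Y0_sq, of "1 - 2*a*(t/real n)" n]
    show AM: "An n \<in> sets M" unfolding An_def Zn_def using D subs by blast
    have Af: "\<forall>\<omega>\<in>An n. r/2 \<le> norm (Zn n n \<omega>)"
      unfolding An_def using aset_sub[where S="space M" and \<rho>="r/2" and Z="Zn n" and k=n] by simp
    have "measure M (An n) \<le> 4 / r^2 * (\<integral>\<omega>. indicator (An n) \<omega> * (norm (Zn n n \<omega>))^2 \<partial>M)"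
      by (rule prob_le_sq[OF P AM _ Af r]) (use D in \<open>simp add: Zn_def\<close>)
    also have "\<dots> \<le> Kb n"
      unfolding Kb_def \<rho>_def E_def using D r unfolding An_def Zn_def
      by (intro mult_left_mono) auto
    finally show "measure M (An n) \<le> Kb n" .
  qed
  have Kb_lim: "Kb \<longlonglongrightarrow> 4 / r^2 * (exp (- 4 * (a - real CARD('d) / (2 * r\<^sup>2)) * t) * E)"
    unfolding Kb_def \<rho>_def by (intro tendsto_intros rho_lim)
  define S where "S = {\<omega> \<in> space M. hit_time Y r \<omega> > ereal t}"
  define Good where "Good = (\<lambda>\<omega>. (\<forall>s\<ge>0. norm (Y s \<omega>) \<ge> r / 2) \<and>
     (\<forall>s u. 0 \<le> s \<and> s \<le> u \<and> (\<forall>v\<in>{s..u}. norm (Y v \<omega>) \<noteq> r / 2) \<longrightarrow> L u \<omega> = L s \<omega>) \<and>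
     (\<forall>s\<ge>0. Y s \<omega> = Y 0 \<omega> + B s \<omega> - (2 * a) *\<^sub>R integral {0..s} (\<lambda>v. Y v \<omega>)
                + 2 *\<^sub>R (LINT v:{0..s}|LS_measure (\<lambda>v. L v \<omega>). Y v \<omega>)))"
  have AEG: "AE \<omega> in M. Good \<omega>"
    unfolding Good_def using eventually_conj[OF outside eventually_conj[OF L_flat SDE]] .
  then obtain N0 where N0: "{\<omega> \<in> space M. \<not> Good \<omega>} \<subseteq> N0" "emeasure M N0 = 0" "N0 \<in> sets M"
    by (rule AE_E)
  have path: "\<exists>N. \<forall>n\<ge>N. \<omega> \<in> An n" if \<omega>S: "\<omega> \<in> S" and \<omega>G: "\<omega> \<notin> N0" for \<omega>
  proof -
    have \<omega>M: "\<omega> \<in> space M" using \<omega>S unfolding S_def by auto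
    have G: "Good \<omega>" using N0(1) \<omega>M \<omega>G by auto
    have ht: "hit_time Y r \<omega> > ereal t" using \<omega>S unfolding S_def by auto
    define y where "y = (\<lambda>s. Y s \<omega>)"
    have nohit: "norm (y s) \<noteq> r/2" if "s \<in> {0..t}" for s
    proof
      assume h: "norm (y s) = r/2"
      have "hit_time Y r \<omega> \<le> ereal s" unfolding hit_time_def
        using h that unfolding y_def by (intro INF_lower) auto
      also have "\<dots> \<le> ereal t" using that by simp
      finally show False using ht by simp
    qed
    note G1 = conjunct1[OF G[unfolded Good_def]]
    note G2 = conjunct1[OF conjunct2[OF G[unfolded Good_def]]]
    note G3 = conjunct2[OF conjunct2[OF G[unfolded Good_def]]]
    have gt: "r/2 < norm (y s)" if "s \<in> {0..t}" for s
    proof -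
      have "r/2 \<le> norm (y s)" using G1 that unfolding y_def by auto
      then show ?thesis using nohit[OF that] by (metis order_le_neq_trans)
    qed
    have Lz: "L s \<omega> = L 0 \<omega>" if "s \<in> {0..t}" for s
    proof -
      have "\<forall>v\<in>{0..s}. norm (Y v \<omega>) \<noteq> r/2" using nohit that unfolding y_def by auto
      then show ?thesis using G2[rule_format, of 0 s] that by auto
    qed
    have LI: "(LINT v:{0..s}|LS_measure (\<lambda>v. L v \<omega>). Y v \<omega>) = 0" if "s \<in> {0..t}" for s
      using LS_zero[of "\<lambda>v. L v \<omega>" s "\<lambda>v. Y v \<omega>"] L_cont[OF \<omega>M] L_mono[OF \<omega>M] Lz[OF that] that
      by auto
    have eq: "\<forall>s\<in>{0..t}. y s = Y 0 \<omega> + B s \<omega> - (2*a) *\<^sub>R integral {0..s} y"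
    proof
      fix s assume s: "s \<in> {0..t}"
      show "y s = Y 0 \<omega> + B s \<omega> - (2*a) *\<^sub>R integral {0..s} y"
        using G3[rule_format, of s] LI[OF s] s unfolding y_def by simp
    qed
    have yc: "continuous_on {0..t} y"
      unfolding y_def using Y_cont[OF \<omega>M] by (rule continuous_on_subset) auto
    obtain x0 where x0: "x0 \<in> {0..t}" "\<And>s. s \<in> {0..t} \<Longrightarrow> norm (y x0) \<le> norm (y s)"
    proof -
      have "continuous_on {0..t} (\<lambda>s. norm (y s))" using yc by (rule continuous_on_norm)
      then have "\<exists>x\<in>{0..t}. \<forall>z\<in>{0..t}. norm (y x) \<le> norm (y z)"
        using t by (intro continuous_attains_inf) auto
      then show ?thesis using that by blast
    qed
    define \<eta> where "\<eta> = norm (y x0) - r/2"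
    have \<eta>: "0 < \<eta>" unfolding \<eta>_def using gt[OF x0(1)] by simp
    obtain N where N: "\<And>n k. n \<ge> N \<Longrightarrow> k \<le> n \<Longrightarrow>
        norm (y (real k * (t / real n)) - euler (1 - 2*a*(t/real n)) (t/real n) B (Y 0) k \<omega>) \<le> \<eta>"
    proof -
      have y0: "y 0 = Y 0 \<omega>" unfolding y_def ..
      show ?thesis using euler_close[of t a y "Y 0" \<omega> B \<eta>, OF t a yc eq y0 \<eta>] that unfolding y_def by auto
    qed
    show ?thesis
    proof (intro exI allI impI)
      fix n assume nN: "N \<le> n"
      have "\<forall>k\<le>n. r/2 \<le> norm (Zn n k \<omega>)"
      proof (intro allI impI)
        fix k assume kn: "k \<le> n"
        have kt: "real k * (t / real n) \<in> {0..t}"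
        proof (cases "n = 0")
          case True then show ?thesis using t by simp
        next
          case False
          have "real k * (t / real n) = (real k / real n) * t" by simp
          also have "\<dots> \<le> 1 * t" using kn False t by (intro mult_right_mono) auto
          finally show ?thesis using t by simp
        qed
        have "norm (y (real k * (t / real n))) - norm (Zn n k \<omega>) \<le> \<eta>"
          using N[OF nN kn] norm_triangle_ineq2[of "y (real k * (t / real n))" "Zn n k \<omega>"]
          unfolding Zn_def by linarith
        moreover have "norm (y x0) \<le> norm (y (real k * (t / real n)))" using x0(2)[OF kt] .
        ultimately show "r/2 \<le> norm (Zn n k \<omega>)" unfolding \<eta>_def by linarith
      qed
      then show "\<omega> \<in> An n" unfolding An_def using aset_mem[OF \<omega>M] by blast
    qed
  qed
  define D where "D = (\<lambda>N. \<Inter>m. An (N + m))"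
  have Dsets: "D N \<in> sets M" for N unfolding D_def using An_sets by auto
  have Dinc: "incseq D"
  proof (rule incseq_SucI)
    fix N show "D N \<subseteq> D (Suc N)" unfolding D_def
    proof
      fix \<omega> assume "\<omega> \<in> (\<Inter>m. An (N + m))"
      then have "\<omega> \<in> An (N + Suc m)" for m by blast
      then show "\<omega> \<in> (\<Inter>m. An (Suc N + m))" by simp
    qed
  qed
  have SD: "S \<subseteq> (\<Union>N. D N) \<union> N0"
  proof
    fix \<omega> assume \<omega>: "\<omega> \<in> S"
    show "\<omega> \<in> (\<Union>N. D N) \<union> N0"
    proof (cases "\<omega> \<in> N0")
      case False
      then obtain N where "\<forall>n\<ge>N. \<omega> \<in> An n" using path[OF \<omega>] by blast
      then have "\<omega> \<in> D N" unfolding D_def by auto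
      then show ?thesis by blast
    qed simp
  qed
  define bound where "bound = 4 / r^2 * (exp (- 4 * (a - real CARD('d) / (2 * r\<^sup>2)) * t) * E)"
  have DN: "measure M (D N) \<le> bound" for N
  proof (rule LIMSEQ_le_const[OF Kb_lim[folded bound_def]])
    show "\<exists>N'. \<forall>n\<ge>N'. measure M (D N) \<le> Kb n"
    proof (intro exI allI impI)
      fix n assume "N \<le> n"
      then have "D N \<subseteq> An n" unfolding D_def
      proof -
        assume Nn: "N \<le> n"
        have "(\<Inter>m. An (N + m)) \<subseteq> An (N + (n - N))" by blast
        then show "(\<Inter>m. An (N + m)) \<subseteq> An n" using Nn by simp
      qed
      then have "measure M (D N) \<le> measure M (An n)"
        using An_sets by (intro finite_measure_mono) auto
      then show "measure M (D N) \<le> Kb n" using An_le[of n] by simp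
    qed
  qed
  have UD: "measure M (\<Union>N. D N) \<le> bound"
  proof (rule LIMSEQ_le_const2)
    show "(\<lambda>N. measure M (D N)) \<longlonglongrightarrow> measure M (\<Union>N. D N)"
      using Dsets Dinc by (intro finite_Lim_measure_incseq) auto
    show "\<exists>N'. \<forall>n\<ge>N'. measure M (D n) \<le> bound" using DN by blast
  qed
  have bnd0: "0 \<le> bound" unfolding bound_def E_def by simp
  have "measure M S \<le> bound"
  proof (cases "S \<in> sets M")
    case False then show ?thesis using bnd0 by (simp add: measure_notin_sets)
  next
    case True
    have "measure M S \<le> measure M ((\<Union>N. D N) \<union> N0)"
      using SD Dsets N0(3) by (intro finite_measure_mono) auto
    also have "\<dots> \<le> measure M (\<Union>N. D N) + measure M N0"
      using Dsets N0(3) by (intro measure_Un_le) auto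
    also have "measure M N0 = 0" using N0(2) by (simp add: measure_def)
    finally show ?thesis using UD by simp
  qed
  also have "bound = 4 * (\<integral>\<omega>. (norm (Y 0 \<omega>))\<^sup>2 \<partial>M) / r\<^sup>2
              * exp (- 4 * (a - real CARD('d) / (2 * r\<^sup>2)) * t)"
    unfolding bound_def E_def by (simp add: field_simps)
  finally show ?thesis unfolding S_def .
qed

end
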